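(* Let $(V,\|\cdot\|)$ be a normed plane, let $x,y\in V$ be distinct, and suppose there is a line $l$ with $l\subseteq\mathrm{bis}(x,y)$. Then for any nondegenerate segment $[zw]\subseteq l$ whose midpoint is $\frac{x+y}{2}$, we have $\langle xy\rangle\subseteq\mathrm{bis}(z,w)$.
   Context: A normed (Minkowski) plane $(V,\|\cdot\|)$ is a two-dimensional real vector space with a norm. For $x,y\in V$, $[xy]$ denotes the closed segment and $\langle xy\rangle$ the line through $x,y$. For distinct $x,y$, $\mathrm{bis}(x,y)=\{z\in V:\|z-x\|=\|z-y\|\}$. *)

theory Defs
  imports "HOL-Analysis.Analysis"
begin

definition bis :: "'a::real_normed_vector \<Rightarrow> 'a \<Rightarrow> 'a set" where
  "bis x y = {z. norm (z - x) = norm (z - y)}"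

definition line_through :: "'a::real_normed_vector \<Rightarrow> 'a \<Rightarrow> 'a set" where
  "line_through a b = {a + t *\<^sub>R (b - a) | t. True}"

definition is_line :: "'a::real_normed_vector set \<Rightarrow> bool" where
  "is_line l \<longleftrightarrow> (\<exists>a b. a \<noteq> b \<and> l = line_through a b)"

end

theory Submission
  imports Defs
begin

lemma key:
  fixes u v :: "'a::real_normed_vector"
  assumes h: "\<And>t::real. norm (t *\<^sub>R u + v) = norm (t *\<^sub>R u - v)"
  shows "norm (s *\<^sub>R v + u) = norm (s *\<^sub>R v - u)"
proof (cases "s = 0")
  case True then show ?thesis by (simp add: norm_minus_commute)
next
  case False
  have "norm (s *\<^sub>R v + u) = norm (s *\<^sub>R ((1/s) *\<^sub>R u + v))"
    using False by (simp add: algebra_simps)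
  also have "\<dots> = \<bar>s\<bar> * norm ((1/s) *\<^sub>R u + v)" by simp
  also have "\<dots> = \<bar>s\<bar> * norm ((1/s) *\<^sub>R u - v)" using h by simp
  also have "\<dots> = norm (s *\<^sub>R ((1/s) *\<^sub>R u - v))" by simp
  also have "\<dots> = norm (u - s *\<^sub>R v)" using False by (simp add: algebra_simps)
  also have "\<dots> = norm (s *\<^sub>R v - u)" by (simp add: norm_minus_commute)
  finally show ?thesis .
qed

theorem lemma2p2:
  fixes x y z w :: "'a::real_normed_vector" and l :: "'a set"
  assumes plane: "dim (UNIV :: 'a set) = 2"
    and xy: "x \<noteq> y"
    and l: "is_line l" "l \<subseteq> bis x y"
    and zw: "z \<noteq> w" "closed_segment z w \<subseteq> l"
    and mid: "midpoint z w = midpoint x y"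
  shows "line_through x y \<subseteq> bis z w"
proof -
  obtain a b where ab: "a \<noteq> b" "l = line_through a b" using l(1) unfolding is_line_def by blast
  have "z \<in> l" "w \<in> l" using zw(2) by auto
  then obtain r1 r2 where r: "z = a + r1 *\<^sub>R (b - a)" "w = a + r2 *\<^sub>R (b - a)"
    using ab(2) unfolding line_through_def by blast
  have online: "z + t *\<^sub>R (w - z) \<in> l" for t
  proof -
    have "z + t *\<^sub>R (w - z) = a + (r1 + t * (r2 - r1)) *\<^sub>R (b - a)"
      unfolding r by (simp add: algebra_simps)
    then show ?thesis using ab(2) unfolding line_through_def by blast
  qed
  define u where "u = (1/2) *\<^sub>R (w - z)"
  define v where "v = (1/2) *\<^sub>R (y - x)"
  have m: "(1/2) *\<^sub>R (z + w) = (1/2) *\<^sub>R (x + y)"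
    using mid unfolding midpoint_def by (simp add: scaleR_right_distrib)
  have sm: "z + w = x + y"
  proof -
    have "2 *\<^sub>R ((1/2) *\<^sub>R (z + w)) = 2 *\<^sub>R ((1/2) *\<^sub>R (x + y))" using m by simp
    then show ?thesis by simp
  qed
  then have w': "w = x + y - z" by (simp add: algebra_simps)
  have zx: "z = x + v - u" unfolding u_def v_def w' by (simp add: algebra_simps scaleR_2[symmetric] scaleR_left_distrib[symmetric])
  have wx: "w = x + v + u" unfolding u_def v_def w' by (simp add: algebra_simps scaleR_2[symmetric] scaleR_left_distrib[symmetric])
  have yx: "y = x + 2 *\<^sub>R v" unfolding v_def by (simp add: algebra_simps)
  have h: "norm (t *\<^sub>R u + v) = norm (t *\<^sub>R u - v)" for t :: real
  proof -
    have "z + ((t+1)/2) *\<^sub>R (w - z) \<in> bis x y" using online l(2) by blast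
    moreover have "z + ((t+1)/2) *\<^sub>R (w - z) = x + v + t *\<^sub>R u"
    proof -
      have "w - z = 2 *\<^sub>R u" unfolding u_def by simp
      then have "z + ((t+1)/2) *\<^sub>R (w - z) = z + (t+1) *\<^sub>R u" by simp
      also have "\<dots> = x + v + t *\<^sub>R u" unfolding zx by (simp add: algebra_simps)
      finally show ?thesis .
    qed
    ultimately have "norm (x + v + t *\<^sub>R u - x) = norm (x + v + t *\<^sub>R u - y)"
      unfolding bis_def by simp
    moreover have "x + v + t *\<^sub>R u - x = t *\<^sub>R u + v" by simp
    moreover have "x + v + t *\<^sub>R u - y = t *\<^sub>R u - v" unfolding yx by (simp add: algebra_simps scaleR_2 scaleR_left_distrib[symmetric])
    ultimately show ?thesis by simp
  qed
  show ?thesis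
  proof
    fix p assume "p \<in> line_through x y"
    then obtain s where p: "p = x + s *\<^sub>R (y - x)" unfolding line_through_def by blast
    have "p - z = (2 * s - 1) *\<^sub>R v + u" unfolding p zx yx by (simp add: algebra_simps scaleR_2 scaleR_left_distrib[symmetric])
    moreover have "p - w = (2 * s - 1) *\<^sub>R v - u" unfolding p wx yx by (simp add: algebra_simps scaleR_2 scaleR_left_distrib[symmetric])
    ultimately show "p \<in> bis z w" unfolding bis_def using key[OF h] by simp
  qed
qed

end
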